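(* Let $E$ be a Banach lattice and $F$ a Dedekind complete Banach lattice, and let $\mathcal{P}$ be a linear subspace of $\mathrm{L}(E,F)$ satisfying the domination property. Then the set $\mathrm{r\text{-}}\mathcal{P}(E,F)$ of r-$\mathcal{P}$-operators is an order ideal in the Dedekind complete vector lattice $\mathrm{L}_r(E,F)$ of regular operators.
   Context: All vector spaces are real; $\mathrm{L}(E,F)$ is the space of bounded linear operators, ordered by $S\le T$ iff $T-S$ is positive; $\mathrm{L}_r(E,F)$ is the space of regular operators (differences of positive operators). An operator $T:E\to F$ is an r-$\mathcal{P}$-operator if $T=T_1-T_2$ with $T_1,T_2$ positive operators belonging to $\mathcal{P}$. $\mathcal{P}$ satisfies the domination property if $0\le S\le T\in\mathcal{P}$ implies $S\in\mathcal{P}$. *)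

theory Defs
  imports "HOL-Analysis.Analysis"
begin

class banach_lattice = banach + ordered_real_vector + lattice +
  assumes lattice_norm_mono: "sup x (- x) \<le> sup y (- y) \<Longrightarrow> norm x \<le> norm y"

text \<open>Dedekind completeness of F is expressed by the sort conditionally_complete_lattice.\<close>

definition positive_op :: "('a::banach_lattice \<Rightarrow> 'b::banach_lattice) \<Rightarrow> bool" where
  "positive_op T \<longleftrightarrow> (\<forall>x. 0 \<le> x \<longrightarrow> 0 \<le> T x)"

definition op_le :: "('a::banach_lattice \<Rightarrow> 'b::banach_lattice) \<Rightarrow> ('a \<Rightarrow> 'b) \<Rightarrow> bool" where
  "op_le S T \<longleftrightarrow> positive_op (\<lambda>x. T x - S x)"

definition regular_ops :: "('a::banach_lattice \<Rightarrow> 'b::banach_lattice) set" where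
  "regular_ops = {T. \<exists>T1 T2. bounded_linear T1 \<and> bounded_linear T2 \<and>
       positive_op T1 \<and> positive_op T2 \<and> T = (\<lambda>x. T1 x - T2 x)}"

definition op_subspace :: "('a::banach_lattice \<Rightarrow> 'b::banach_lattice) set \<Rightarrow> bool" where
  "op_subspace P \<longleftrightarrow> (\<lambda>x. 0) \<in> P \<and>
     (\<forall>S\<in>P. \<forall>T\<in>P. (\<lambda>x. S x + T x) \<in> P) \<and>
     (\<forall>c. \<forall>T\<in>P. (\<lambda>x. c *\<^sub>R T x) \<in> P)"

definition domination_property :: "('a::banach_lattice \<Rightarrow> 'b::banach_lattice) set \<Rightarrow> bool" where
  "domination_property P \<longleftrightarrow>
     (\<forall>S T. bounded_linear S \<and> positive_op S \<and> op_le S T \<and> T \<in> P \<longrightarrow> S \<in> P)"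

definition r_ops :: "('a::banach_lattice \<Rightarrow> 'b::banach_lattice) set \<Rightarrow> ('a \<Rightarrow> 'b) set" where
  "r_ops P = {T. \<exists>T1 T2. T1 \<in> P \<and> T2 \<in> P \<and> positive_op T1 \<and> positive_op T2 \<and>
                 T = (\<lambda>x. T1 x - T2 x)}"

definition is_op_modulus :: "('a::banach_lattice \<Rightarrow> 'b::banach_lattice) \<Rightarrow> ('a \<Rightarrow> 'b) \<Rightarrow> bool" where
  "is_op_modulus M T \<longleftrightarrow> M \<in> regular_ops \<and> op_le T M \<and> op_le (\<lambda>x. - T x) M \<and>
     (\<forall>N\<in>regular_ops. op_le T N \<and> op_le (\<lambda>x. - T x) N \<longrightarrow> op_le M N)"

definition order_ideal_Lr :: "('a::banach_lattice \<Rightarrow> 'b::banach_lattice) set \<Rightarrow> bool" where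
  "order_ideal_Lr I \<longleftrightarrow> I \<subseteq> regular_ops \<and> op_subspace I \<and>
     (\<forall>S\<in>regular_ops. \<forall>T\<in>I. \<forall>MS MT.
        is_op_modulus MS S \<and> is_op_modulus MT T \<and> op_le MS MT \<longrightarrow> S \<in> I)"

end

theory Submission
  imports Defs
begin

lemma regular_bl: "T \<in> regular_ops \<Longrightarrow> bounded_linear T"
  unfolding regular_ops_def using bounded_linear_sub by blast

lemma op_le_trans: "op_le S T \<Longrightarrow> op_le T U \<Longrightarrow> op_le S U"
  unfolding op_le_def positive_op_def
proof (intro allI impI)
  fix x :: 'a
  assume a: "\<forall>x. 0 \<le> x \<longrightarrow> 0 \<le> T x - S x" "\<forall>x. 0 \<le> x \<longrightarrow> 0 \<le> U x - T x" "0 \<le> x"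
  have "S x \<le> T x" "T x \<le> U x" using a by auto
  then show "0 \<le> U x - S x" by simp
qed

lemma half_nonneg:
  fixes y :: "'b::banach_lattice"
  assumes "0 \<le> y + y" shows "0 \<le> y"
proof -
  have "0 \<le> (1/2::real) *\<^sub>R (y + y)" using assms by (rule scaleR_nonneg_nonneg[rotated]) simp
  moreover have "(1/2::real) *\<^sub>R (y + y) = ((1/2::real) + 1/2) *\<^sub>R y"
    by (simp only: scaleR_add_right scaleR_add_left)
  ultimately show ?thesis by simp
qed

lemma r_opsI: "T1 \<in> P \<Longrightarrow> T2 \<in> P \<Longrightarrow> positive_op T1 \<Longrightarrow> positive_op T2 \<Longrightarrow>
  (\<And>x. T x = T1 x - T2 x) \<Longrightarrow> T \<in> r_ops P"
  unfolding r_ops_def by auto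

lemma pos_scale: "positive_op T \<Longrightarrow> (c::real) \<ge> 0 \<Longrightarrow> positive_op (\<lambda>x. c *\<^sub>R T x)"
  unfolding positive_op_def by (simp add: scaleR_nonneg_nonneg)

lemma pos_add: "positive_op T \<Longrightarrow> positive_op S \<Longrightarrow> positive_op (\<lambda>x. T x + S x)"
  unfolding positive_op_def by (simp add: add_nonneg_nonneg)

theorem proposition3p5:
  fixes P :: "('a::banach_lattice \<Rightarrow> 'b::{banach_lattice, conditionally_complete_lattice}) set"
  assumes "P \<subseteq> {T. bounded_linear T}"
    and "op_subspace P"
    and "domination_property P"
  shows "order_ideal_Lr (r_ops P)"
proof -
  have bl: "\<And>T. T \<in> P \<Longrightarrow> bounded_linear T" using assms(1) by blast
  have P0: "(\<lambda>x. 0) \<in> P" and Padd: "\<And>S T. S \<in> P \<Longrightarrow> T \<in> P \<Longrightarrow> (\<lambda>x. S x + T x) \<in> P"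
    and Psc: "\<And>c T. T \<in> P \<Longrightarrow> (\<lambda>x. c *\<^sub>R T x) \<in> P"
    using assms(2) unfolding op_subspace_def by auto
  have dom: "\<And>S T. bounded_linear S \<Longrightarrow> positive_op S \<Longrightarrow> op_le S T \<Longrightarrow> T \<in> P \<Longrightarrow> S \<in> P"
    using assms(3) unfolding domination_property_def by blast
  have sub: "r_ops P \<subseteq> regular_ops"
    unfolding r_ops_def regular_ops_def using bl by blast
  have sp: "op_subspace (r_ops P)"
    unfolding op_subspace_def
  proof (intro conjI ballI allI)
    show "(\<lambda>x. 0) \<in> r_ops P" unfolding r_ops_def
      using P0 by (intro CollectI exI[of _ "\<lambda>x. 0"]) (auto simp: positive_op_def)
  next
    fix S T assume "S \<in> r_ops P" "T \<in> r_ops P"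
    then obtain S1 S2 T1 T2 where s: "S1 \<in> P" "S2 \<in> P" "positive_op S1" "positive_op S2"
      "S = (\<lambda>x. S1 x - S2 x)" and t: "T1 \<in> P" "T2 \<in> P" "positive_op T1" "positive_op T2"
      "T = (\<lambda>x. T1 x - T2 x)" unfolding r_ops_def by blast
    show "(\<lambda>x. S x + T x) \<in> r_ops P"
      apply (rule r_opsI[of "\<lambda>x. S1 x + T1 x" _ "\<lambda>x. S2 x + T2 x"])
      using s t Padd pos_add by (auto simp: algebra_simps)
  next
    fix c :: real and T assume "T \<in> r_ops P"
    then obtain T1 T2 where t: "T1 \<in> P" "T2 \<in> P" "positive_op T1" "positive_op T2"
      "T = (\<lambda>x. T1 x - T2 x)" unfolding r_ops_def by blast
    show "(\<lambda>x. c *\<^sub>R T x) \<in> r_ops P"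
    proof (cases "c \<ge> 0")
      case True
      then show ?thesis
        apply (intro r_opsI[of "\<lambda>x. c *\<^sub>R T1 x" _ "\<lambda>x. c *\<^sub>R T2 x"])
        using t Psc pos_scale by (auto simp: algebra_simps)
    next
      case False
      show ?thesis
        apply (rule r_opsI[of "\<lambda>x. (-c) *\<^sub>R T2 x" _ "\<lambda>x. (-c) *\<^sub>R T1 x"])
            apply (rule Psc, rule t)
           apply (rule Psc, rule t)
          apply (rule pos_scale, rule t, use False in simp)
         apply (rule pos_scale, rule t, use False in simp)
        using t by (auto simp: algebra_simps)
    qed
  qed
  have solid: "S \<in> r_ops P"
    if S: "S \<in> regular_ops" and T: "T \<in> r_ops P" and mS: "is_op_modulus MS S"
      and mT: "is_op_modulus MT T" and le: "op_le MS MT" for S T MS MT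
  proof -
    obtain T1 T2 where t: "T1 \<in> P" "T2 \<in> P" "positive_op T1" "positive_op T2"
      "T = (\<lambda>x. T1 x - T2 x)" using T unfolding r_ops_def by blast
    let ?U = "\<lambda>x. T1 x + T2 x"
    have UP: "?U \<in> P" using Padd t by blast
    have Ureg: "?U \<in> regular_ops" unfolding regular_ops_def
    proof (intro CollectI exI conjI)
      show "bounded_linear ?U" using bl[OF UP] .
      show "bounded_linear (\<lambda>x. 0::'b)" by (rule bounded_linear_zero)
      show "positive_op ?U" using t pos_add by blast
      show "positive_op (\<lambda>x. 0::'b)" by (simp add: positive_op_def)
      show "?U = (\<lambda>x. ?U x - 0)" by simp
    qed
    have "op_le T ?U" using t unfolding op_le_def positive_op_def
      by (auto simp: algebra_simps add_nonneg_nonneg)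
    moreover have "op_le (\<lambda>x. - T x) ?U" using t unfolding op_le_def positive_op_def
      by (auto simp: algebra_simps add_nonneg_nonneg)
    ultimately have "op_le MT ?U" using mT Ureg unfolding is_op_modulus_def by blast
    hence MSU: "op_le MS ?U" using le op_le_trans by blast
    have MSreg: "MS \<in> regular_ops" and s1: "op_le S MS" and s2: "op_le (\<lambda>x. - S x) MS"
      using mS unfolding is_op_modulus_def by auto
    have blMS: "bounded_linear MS" using regular_bl[OF MSreg] .
    have blS: "bounded_linear S" using regular_bl[OF S] .
    have posMS: "positive_op MS" unfolding positive_op_def
    proof (intro allI impI)
      fix x :: 'a assume "0 \<le> x"
      hence "0 \<le> MS x - S x" "0 \<le> MS x - - S x" using s1 s2 unfolding op_le_def positive_op_def by auto
      hence "0 \<le> (MS x - S x) + (MS x - - S x)" by (rule add_nonneg_nonneg)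
      moreover have "(MS x - S x) + (MS x - - S x) = MS x + MS x" by (simp add: algebra_simps)
      ultimately have "0 \<le> MS x + MS x" by argo
      then show "0 \<le> MS x" by (rule half_nonneg)
    qed
    have MSP: "MS \<in> P" using dom[OF blMS posMS MSU UP] .
    let ?V = "\<lambda>x. MS x - S x"
    have blV: "bounded_linear ?V" using blMS blS bounded_linear_sub by blast
    have posV: "positive_op ?V" using s1 unfolding op_le_def .
    have "op_le ?V (\<lambda>x. 2 *\<^sub>R MS x)" using s2 unfolding op_le_def positive_op_def
      by (auto simp: algebra_simps scaleR_2)
    hence VP: "?V \<in> P" using dom[OF blV posV] Psc[OF MSP] by blast
    show ?thesis
      by (rule r_opsI[OF MSP VP posMS posV]) simp
  qed
  show ?thesis unfolding order_ideal_Lr_def using sub sp solid by blast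
qed

end
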